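(* Consider a sequence of finite populations indexed by $n\to\infty$, each satisfying Assumption 1, Assumption 2 and the null hypothesis $H_0:\ T_i(1)=T_i(0)$ for all $i$, and condition on all potential event times. Then $\sum_{k=1}^{K-1}\xi_{3k}=n^{1/2}\,O_{\Pr}(1)$, where $$\xi_{3k}=\frac{D_k\,\mathbb{E}(N_k-D_k\mid\boldsymbol{T}(1),\boldsymbol{T}(0),N_k)\,\mathbb{E}\{N_{1k}(N_k-N_{1k})\mid\boldsymbol{T}(1),\boldsymbol{T}(0),N_k\}}{N_k^2(N_k-1)}-\mathbb{E}(D_k\mid\boldsymbol{T}(1),\boldsymbol{T}(0))(1-h_k)\phi_k(1-\phi_k).$$
   Context: Unit $i$ ($1\le i\le n$) has potential event times $T_i(1),T_i(0)\ge 0$ (fixed constants), potential censoring times $C_i(1),C_i(0)\in[0,\infty]$, treatment indicator $Z_i\in\{0,1\}$; bold letters denote $n$-vectors. Assumption 1: conditional on all potential event and censoring times, the $Z_i$ are i.i.d. Bernoulli$(p_1)$, $p_1=1-p_0\in(0,1)$. Assumption 2: $(\boldsymbol{C}(1),\boldsymbol{C}(0))$ is independent of $(\boldsymbol{T}(1),\boldsymbol{T}(0))$ and the pairs $(C_i(1),C_i(0))$ are i.i.d. across $i$. $G_z(c)=\Pr(C_i(z)\ge c)$, $G(t)=p_1G_1(t)+p_0G_0(t)$. Realized: $W_i=\min\{T_i,C_i\}$, $\Delta_i=\mathbb{1}(T_i\le C_i)$ with $T_i=Z_iT_i(1)+(1-Z_i)T_i(0)$, $C_i=Z_iC_i(1)+(1-Z_i)C_i(0)$.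 Let $t_1<\dots<t_K$ be the distinct values of $\{T_i(0)\}$, $d_k=\#\{i:T_i(0)=t_k\}$, $n_k=\#\{i:T_i(0)\ge t_k\}$, $h_k=d_k/n_k$, $\phi_k=p_1G_1(t_k)/G(t_k)$; $N_{1k}=\sum_iZ_i\mathbb{1}(W_i\ge t_k)$, $N_k=\sum_i\mathbb{1}(W_i\ge t_k)$, $D_k=\sum_i\Delta_i\mathbb{1}(W_i=t_k)$; convention $0/0:=0$. $X_n=a_nO_{\Pr}(1)$ means $X_n/a_n$ is bounded in probability as $n\to\infty$; all quantities may depend on $n$. *)

theory Defs
  imports "HOL-Probability.Probability"
begin

text \<open>Conditional on the potential event times (treated as fixed constants), the
randomness of population n consists of, for each unit i < n, the triple
(Z_i, C_i(1), C_i(0)). By Assumptions 1 and 2 these triples are i.i.d. with law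
Bernoulli(p1) x mu, where mu is the joint law of (C_i(1), C_i(0)) on [0,infinity]^2.\<close>

type_synonym outcome = "nat \<Rightarrow> bool \<times> ennreal \<times> ennreal"

definition unit_law :: "real \<Rightarrow> (ennreal \<times> ennreal) measure \<Rightarrow> (bool \<times> ennreal \<times> ennreal) measure" where
  "unit_law p \<mu> = measure_pmf (bernoulli_pmf p) \<Otimes>\<^sub>M \<mu>"

definition pop_space :: "nat \<Rightarrow> real \<Rightarrow> (ennreal \<times> ennreal) measure \<Rightarrow> outcome measure" where
  "pop_space n p \<mu> = PiM {..<n} (\<lambda>_. unit_law p \<mu>)"

definition Zr :: "outcome \<Rightarrow> nat \<Rightarrow> bool" where
  "Zr \<omega> i = fst (\<omega> i)"

definition Cr :: "outcome \<Rightarrow> nat \<Rightarrow> ennreal" where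
  "Cr \<omega> i = (if Zr \<omega> i then fst (snd (\<omega> i)) else snd (snd (\<omega> i)))"

definition Tr :: "(nat \<Rightarrow> real) \<Rightarrow> (nat \<Rightarrow> real) \<Rightarrow> outcome \<Rightarrow> nat \<Rightarrow> real" where
  "Tr T1 T0 \<omega> i = (if Zr \<omega> i then T1 i else T0 i)"

definition Wr :: "(nat \<Rightarrow> real) \<Rightarrow> (nat \<Rightarrow> real) \<Rightarrow> outcome \<Rightarrow> nat \<Rightarrow> ennreal" where
  "Wr T1 T0 \<omega> i = min (ennreal (Tr T1 T0 \<omega> i)) (Cr \<omega> i)"

definition Delta :: "(nat \<Rightarrow> real) \<Rightarrow> (nat \<Rightarrow> real) \<Rightarrow> outcome \<Rightarrow> nat \<Rightarrow> bool" where
  "Delta T1 T0 \<omega> i = (ennreal (Tr T1 T0 \<omega> i) \<le> Cr \<omega> i)"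

text \<open>distinct values t_1 < ... < t_K of T_i(0), i < n (1-indexed)\<close>
definition Ktimes :: "nat \<Rightarrow> (nat \<Rightarrow> real) \<Rightarrow> nat" where
  "Ktimes n T0 = card (T0 ` {..<n})"

definition tk :: "nat \<Rightarrow> (nat \<Rightarrow> real) \<Rightarrow> nat \<Rightarrow> real" where
  "tk n T0 k = sorted_list_of_set (T0 ` {..<n}) ! (k - 1)"

definition dk :: "nat \<Rightarrow> (nat \<Rightarrow> real) \<Rightarrow> nat \<Rightarrow> nat" where
  "dk n T0 k = card {i. i < n \<and> T0 i = tk n T0 k}"

definition nk :: "nat \<Rightarrow> (nat \<Rightarrow> real) \<Rightarrow> nat \<Rightarrow> nat" where
  "nk n T0 k = card {i. i < n \<and> tk n T0 k \<le> T0 i}"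

definition hk :: "nat \<Rightarrow> (nat \<Rightarrow> real) \<Rightarrow> nat \<Rightarrow> real" where
  "hk n T0 k = real (dk n T0 k) / real (nk n T0 k)"

definition Gz :: "(ennreal \<times> ennreal) measure \<Rightarrow> bool \<Rightarrow> real \<Rightarrow> real" where
  "Gz \<mu> z c = measure \<mu> {x \<in> space \<mu>. ennreal c \<le> (if z then fst x else snd x)}"

definition Gmix :: "real \<Rightarrow> (ennreal \<times> ennreal) measure \<Rightarrow> real \<Rightarrow> real" where
  "Gmix p \<mu> c = p * Gz \<mu> True c + (1 - p) * Gz \<mu> False c"

text \<open>phi_k = p1 G1(t_k) / G(t_k) (Isabelle's x / 0 = 0 matches the 0/0 := 0 convention)\<close>
definition phik :: "nat \<Rightarrow> real \<Rightarrow> (ennreal \<times> ennreal) measure \<Rightarrow> (nat \<Rightarrow> real) \<Rightarrow> nat \<Rightarrow> real" where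
  "phik n p \<mu> T0 k = p * Gz \<mu> True (tk n T0 k) / Gmix p \<mu> (tk n T0 k)"

definition N1k :: "nat \<Rightarrow> (nat \<Rightarrow> real) \<Rightarrow> (nat \<Rightarrow> real) \<Rightarrow> nat \<Rightarrow> outcome \<Rightarrow> real" where
  "N1k n T1 T0 k \<omega> = real (card {i. i < n \<and> Zr \<omega> i \<and> ennreal (tk n T0 k) \<le> Wr T1 T0 \<omega> i})"

definition Nk :: "nat \<Rightarrow> (nat \<Rightarrow> real) \<Rightarrow> (nat \<Rightarrow> real) \<Rightarrow> nat \<Rightarrow> outcome \<Rightarrow> real" where
  "Nk n T1 T0 k \<omega> = real (card {i. i < n \<and> ennreal (tk n T0 k) \<le> Wr T1 T0 \<omega> i})"

definition Dk :: "nat \<Rightarrow> (nat \<Rightarrow> real) \<Rightarrow> (nat \<Rightarrow> real) \<Rightarrow> nat \<Rightarrow> outcome \<Rightarrow> real" where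
  "Dk n T1 T0 k \<omega> = real (card {i. i < n \<and> Delta T1 T0 \<omega> i \<and> Wr T1 T0 \<omega> i = ennreal (tk n T0 k)})"

definition cond_exp_disc :: "'a measure \<Rightarrow> ('a \<Rightarrow> real) \<Rightarrow> ('a \<Rightarrow> 'b) \<Rightarrow> 'a \<Rightarrow> real" where
  "cond_exp_disc M X Y \<omega> =
     (\<integral>x. indicator {x \<in> space M. Y x = Y \<omega>} x * X x \<partial>M) / measure M {x \<in> space M. Y x = Y \<omega>}"

definition xi3 :: "nat \<Rightarrow> real \<Rightarrow> (ennreal \<times> ennreal) measure \<Rightarrow> (nat \<Rightarrow> real) \<Rightarrow> (nat \<Rightarrow> real)
                    \<Rightarrow> nat \<Rightarrow> outcome \<Rightarrow> real" where
  "xi3 n p \<mu> T1 T0 k \<omega> =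
     (let M = pop_space n p \<mu>; N = Nk n T1 T0 k; D = Dk n T1 T0 k; N1 = N1k n T1 T0 k in
      D \<omega> * cond_exp_disc M (\<lambda>x. N x - D x) N \<omega>
          * cond_exp_disc M (\<lambda>x. N1 x * (N x - N1 x)) N \<omega>
        / ((N \<omega>)\<^sup>2 * (N \<omega> - 1))
      - (\<integral>x. D x \<partial>M) * (1 - hk n T0 k) * phik n p \<mu> T0 k * (1 - phik n p \<mu> T0 k))"

definition bounded_in_prob :: "(nat \<Rightarrow> 'a measure) \<Rightarrow> (nat \<Rightarrow> 'a \<Rightarrow> real) \<Rightarrow> bool" where
  "bounded_in_prob M X \<longleftrightarrow>
     (\<forall>\<epsilon>>0. \<exists>B. \<forall>\<^sub>F n in sequentially. measure (M n) {\<omega> \<in> space (M n). B < \<bar>X n \<omega>\<bar>} < \<epsilon>)"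

end

theory Submission
  imports Defs
begin


lemma indep_single:
  fixes F :: "('i \<Rightarrow> 'a) \<Rightarrow> real" and f :: "'a \<Rightarrow> real"
  assumes U: "prob_space U" and fin: "finite I" and i: "i \<in> I"
    and Fm: "F \<in> borel_measurable (PiM I (\<lambda>_. U))"
    and Fb: "\<And>\<omega>. \<omega> \<in> space (PiM I (\<lambda>_. U)) \<Longrightarrow> \<bar>F \<omega>\<bar> \<le> B"
    and fm: "f \<in> borel_measurable U" and fb: "\<And>u. u \<in> space U \<Longrightarrow> \<bar>f u\<bar> \<le> C"
    and inv: "\<And>\<omega> y. F (\<omega> (i:=y)) = F \<omega>"
  shows "(\<integral>\<omega>. F \<omega> * f (\<omega> i) \<partial>PiM I (\<lambda>_. U)) = (\<integral>\<omega>. F \<omega> \<partial>PiM I (\<lambda>_. U)) * (\<integral>u. f u \<partial>U)"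
proof -
  interpret U: prob_space U by fact
  interpret P: product_prob_space "\<lambda>_. U" I by unfold_locales
  define J where "J = I - {i}"
  have IJ: "I = insert i J" "i \<notin> J" "finite J" using i fin by (auto simp: J_def)
  interpret PJ: prob_space "PiM J (\<lambda>_. U)" by (rule prob_space_PiM) (rule U)
  have PIp: "prob_space (PiM I (\<lambda>_. U))" by (rule prob_space_PiM) (rule U)
  then have PIf: "finite_measure (PiM I (\<lambda>_. U))" by (rule prob_space.finite_measure)
  have fim: "(\<lambda>\<omega>. f (\<omega> i)) \<in> borel_measurable (PiM I (\<lambda>_. U))"
    using measurable_comp[OF measurable_component_singleton[OF i] fm] by (simp add: comp_def)
  have int1: "integrable (PiM I (\<lambda>_. U)) F"
    by (rule finite_measure.integrable_const_bound[OF PIf, where B=B]) (use Fm Fb in auto)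
  have int2: "integrable (PiM I (\<lambda>_. U)) (\<lambda>\<omega>. F \<omega> * f (\<omega> i))"
  proof (rule finite_measure.integrable_const_bound[OF PIf, where B="B*C"])
    show "AE x in PiM I (\<lambda>_. U). norm (F x * f (x i)) \<le> B * C"
    proof (rule AE_I2)
      fix x assume x: "x \<in> space (PiM I (\<lambda>_. U))"
      have "x i \<in> space U" using x i by (auto simp: space_PiM)
      then show "norm (F x * f (x i)) \<le> B * C"
        using Fb[OF x] fb[of "x i"] by (simp add: abs_mult mult_mono')
    qed
  qed (use Fm fim in auto)
  have "(\<integral>\<omega>. F \<omega> * f (\<omega> i) \<partial>PiM I (\<lambda>_. U)) = (\<integral>x. (\<integral>y. F (x(i:=y)) * f y \<partial>U) \<partial>PiM J (\<lambda>_. U))"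
    using P.product_integral_insert[OF IJ(3,2), of "\<lambda>\<omega>. F \<omega> * f (\<omega> i)"] int2 IJ(1) by simp
  also have "\<dots> = (\<integral>x. F x * (\<integral>y. f y \<partial>U) \<partial>PiM J (\<lambda>_. U))"
    by (simp add: inv)
  also have "\<dots> = (\<integral>x. F x \<partial>PiM J (\<lambda>_. U)) * (\<integral>y. f y \<partial>U)" by simp
  also have "(\<integral>x. F x \<partial>PiM J (\<lambda>_. U)) = (\<integral>x. (\<integral>y. F (x(i:=y)) \<partial>U) \<partial>PiM J (\<lambda>_. U))"
    by (simp add: inv U.prob_space)
  also have "\<dots> = (\<integral>\<omega>. F \<omega> \<partial>PiM I (\<lambda>_. U))"
    using P.product_integral_insert[OF IJ(3,2), of F] int1 IJ(1) by simp
  finally show ?thesis .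
qed




locale cnt_setting =
  fixes U :: "'a measure" and I :: "'i set" and a b c :: "'a \<Rightarrow> real"
  assumes U: "prob_space U" and finI: "finite I"
    and am[measurable]: "a \<in> borel_measurable U"
    and bm[measurable]: "b \<in> borel_measurable U"
    and cm[measurable]: "c \<in> borel_measurable U"
    and abc: "\<And>u. a u = b u + c u"
    and b01: "\<And>u. b u = 0 \<or> b u = 1"
    and c01: "\<And>u. c u = 0 \<or> c u = 1"
    and bc: "\<And>u. b u * c u = 0"
begin

abbreviation "M \<equiv> PiM I (\<lambda>_. U)"

definition cnt :: "'i set \<Rightarrow> ('i \<Rightarrow> 'a) \<Rightarrow> real" where
  "cnt S x = (\<Sum>l\<in>S. a (x l))"

definition Ind :: "'i set \<Rightarrow> real \<Rightarrow> ('i \<Rightarrow> 'a) \<Rightarrow> real" where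
  "Ind S r x = (if cnt S x = r then 1 else 0)"

lemma a01: "a u = 0 \<or> a u = 1"
  using abc[of u] b01[of u] c01[of u] bc[of u] by auto

lemma Mprob: "prob_space M" by (rule prob_space_PiM) (rule U)

lemma Mfin: "finite_measure M" using Mprob by (rule prob_space.finite_measure)

lemma comp_meas: "i \<in> I \<Longrightarrow> f \<in> borel_measurable U \<Longrightarrow> (\<lambda>x. f (x i)) \<in> borel_measurable M"
  using measurable_comp[OF measurable_component_singleton, of i I f] by (simp add: comp_def)

lemma cnt_meas: "S \<subseteq> I \<Longrightarrow> cnt S \<in> borel_measurable M"
  unfolding cnt_def by (intro borel_measurable_sum comp_meas) auto

lemma Ind_meas: "S \<subseteq> I \<Longrightarrow> Ind S r \<in> borel_measurable M"
proof -
  assume S: "S \<subseteq> I"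
  have [measurable]: "cnt S \<in> borel_measurable M" using cnt_meas[OF S] .
  show ?thesis unfolding Ind_def by measurable
qed

lemma intg: "(F :: ('i \<Rightarrow> 'a) \<Rightarrow> real) \<in> borel_measurable M \<Longrightarrow> (\<And>x. \<bar>F x\<bar> \<le> (B::real)) \<Longrightarrow> integrable M F"
  by (rule finite_measure.integrable_const_bound[OF Mfin, where B=B]) auto

lemma intgU: "(f :: 'a \<Rightarrow> real) \<in> borel_measurable U \<Longrightarrow> (\<And>x. \<bar>f x\<bar> \<le> (B::real)) \<Longrightarrow> integrable U f"
  by (rule finite_measure.integrable_const_bound[OF prob_space.finite_measure[OF U], where B=B]) auto

lemma Ind_bd: "\<bar>Ind S r x\<bar> \<le> 1" by (simp add: Ind_def)
lemma a_bd: "\<bar>a u\<bar> \<le> 1" using a01[of u] by auto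
lemma b_bd: "\<bar>b u\<bar> \<le> 1" using b01[of u] by auto
lemma a1_bd: "\<bar>1 - a u\<bar> \<le> 1" using a01[of u] by auto
lemma c_bd: "\<bar>c u\<bar> \<le> 1" using c01[of u] by auto

lemma cnt_bd: "finite S \<Longrightarrow> \<bar>cnt S x\<bar> \<le> real (card S)"
proof -
  assume "finite S"
  have "\<bar>cnt S x\<bar> \<le> (\<Sum>l\<in>S. \<bar>a (x l)\<bar>)" unfolding cnt_def by (rule sum_abs)
  also have "\<dots> \<le> (\<Sum>l\<in>S. 1)" by (intro sum_mono a_bd)
  finally show ?thesis by simp
qed

lemma indep:
  fixes F :: "('i \<Rightarrow> 'a) \<Rightarrow> real" and f :: "'a \<Rightarrow> real" and B C :: real
  assumes i: "i \<in> I" and Fm: "F \<in> borel_measurable M" and Fb: "\<And>x. \<bar>F x\<bar> \<le> B"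
    and fm: "f \<in> borel_measurable U" and fb: "\<And>u. \<bar>f u\<bar> \<le> C"
    and inv: "\<And>x y. F (x(i:=y)) = F x"
  shows "(\<integral>x. F x * f (x i) \<partial>M) = (\<integral>x. F x \<partial>M) * (\<integral>u. f u \<partial>U)"
  by (rule indep_single[where B=B and C=C]) (use U finI i Fm Fb fm fb inv in auto)

lemma intg_Ind_f: "S \<subseteq> I \<Longrightarrow> i \<in> I \<Longrightarrow> f \<in> borel_measurable U \<Longrightarrow> (\<And>u. \<bar>f u\<bar> \<le> 1)
   \<Longrightarrow> integrable M (\<lambda>x. Ind S r x * f (x i))"
  by (rule intg[where B=1]) (auto simp: abs_mult intro!: mult_le_one Ind_bd borel_measurable_times Ind_meas comp_meas)

lemma cnt_upd: "i \<notin> S \<Longrightarrow> cnt S (x(i:=y)) = cnt S x"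
  unfolding cnt_def by (intro sum.cong) auto

lemma Ind_upd: "i \<notin> S \<Longrightarrow> Ind S r (x(i:=y)) = Ind S r x"
  unfolding Ind_def by (simp add: cnt_upd)

lemma cnt_remove: "finite S \<Longrightarrow> i \<in> S \<Longrightarrow> cnt S x = cnt (S - {i}) x + a (x i)"
  unfolding cnt_def by (simp add: sum.remove add.commute)

definition "ga = (\<integral>u. a u \<partial>U)"
definition "gb = (\<integral>u. b u \<partial>U)"
definition "gc = (\<integral>u. c u \<partial>U)"

lemma P1:
  assumes S: "S \<subseteq> I" and i: "i \<in> S"
  shows "(\<integral>x. Ind S r x * a (x i) \<partial>M) = (\<integral>x. Ind (S - {i}) (r - 1) x \<partial>M) * ga"
proof -
  have fS: "finite S" using S finI finite_subset by blast
  have "(\<integral>x. Ind S r x * a (x i) \<partial>M) = (\<integral>x. Ind (S - {i}) (r - 1) x * a (x i) \<partial>M)"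
  proof (rule Bochner_Integration.integral_cong[OF refl])
    fix x
    show "Ind S r x * a (x i) = Ind (S - {i}) (r - 1) x * a (x i)"
      using a01[of "x i"] cnt_remove[OF fS i, of x] unfolding Ind_def by auto
  qed
  also have "\<dots> = (\<integral>x. Ind (S - {i}) (r - 1) x \<partial>M) * ga"
    unfolding ga_def
    by (rule indep[where B=1 and C=1]) (use S i in \<open>auto intro: Ind_meas Ind_bd a_bd Ind_upd\<close>)
  finally show ?thesis .
qed

lemma P0:
  assumes S: "S \<subseteq> I" and i: "i \<in> S"
  shows "(\<integral>x. Ind S r x \<partial>M) = (1 - ga) * (\<integral>x. Ind (S - {i}) r x \<partial>M) + ga * (\<integral>x. Ind (S - {i}) (r - 1) x \<partial>M)"
proof -
  have fS: "finite S" using S finI finite_subset by blast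
  have iI: "i \<in> I" using S i by auto
  have S': "S - {i} \<subseteq> I" using S by auto
  have "(\<integral>x. Ind S r x \<partial>M) = (\<integral>x. Ind (S - {i}) r x * (1 - a (x i)) + Ind (S - {i}) (r - 1) x * a (x i) \<partial>M)"
  proof (rule Bochner_Integration.integral_cong[OF refl])
    fix x
    show "Ind S r x = Ind (S - {i}) r x * (1 - a (x i)) + Ind (S - {i}) (r - 1) x * a (x i)"
      using a01[of "x i"] cnt_remove[OF fS i, of x] unfolding Ind_def by auto
  qed
  also have "\<dots> = (\<integral>x. Ind (S - {i}) r x * (1 - a (x i)) \<partial>M) + (\<integral>x. Ind (S - {i}) (r - 1) x * a (x i) \<partial>M)"
  proof (rule Bochner_Integration.integral_add)
    show "integrable M (\<lambda>x. Ind (S - {i}) r x * (1 - a (x i)))"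
      by (rule intg_Ind_f[OF S' iI]) (auto intro: a1_bd)
    show "integrable M (\<lambda>x. Ind (S - {i}) (r - 1) x * a (x i))"
      by (rule intg_Ind_f[OF S' iI]) (auto intro: a_bd)
  qed
  also have "(\<integral>x. Ind (S - {i}) r x * (1 - a (x i)) \<partial>M) = (\<integral>x. Ind (S - {i}) r x \<partial>M) * (\<integral>u. 1 - a u \<partial>U)"
    by (rule indep[where B=1 and C=1]) (use S' iI in \<open>auto intro: Ind_meas Ind_bd Ind_upd a1_bd\<close>)
  also have "(\<integral>u. 1 - a u \<partial>U) = 1 - ga"
    unfolding ga_def using prob_space.prob_space[OF U]
    by (subst Bochner_Integration.integral_diff) (auto intro: intgU[where B=1] a_bd)
  also have "(\<integral>x. Ind (S - {i}) (r - 1) x * a (x i) \<partial>M) = (\<integral>x. Ind (S - {i}) (r - 1) x \<partial>M) * ga"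
    unfolding ga_def
    by (rule indep[where B=1 and C=1]) (use S' iI in \<open>auto intro: Ind_meas Ind_bd a_bd Ind_upd\<close>)
  finally show ?thesis by simp
qed

lemma Sym:
  assumes S: "S \<subseteq> I" and i: "i \<in> S" and j: "j \<in> S" and ij: "i \<noteq> j"
  shows "(\<integral>x. Ind S r x * a (x i) \<partial>M) = (\<integral>x. Ind S r x * a (x j) \<partial>M)"
proof -
  have e: "S - {i} - {j} = S - {j} - {i}" by auto
  have "(\<integral>x. Ind S r x * a (x i) \<partial>M) = (\<integral>x. Ind (S - {i}) (r - 1) x \<partial>M) * ga" by (rule P1[OF S i])
  also have "\<dots> = ((1 - ga) * (\<integral>x. Ind (S - {i} - {j}) (r - 1) x \<partial>M) + ga * (\<integral>x. Ind (S - {i} - {j}) (r - 1 - 1) x \<partial>M)) * ga"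
    using P0[of "S - {i}" j "r - 1"] S j ij by auto
  also have "\<dots> = ((1 - ga) * (\<integral>x. Ind (S - {j} - {i}) (r - 1) x \<partial>M) + ga * (\<integral>x. Ind (S - {j} - {i}) (r - 1 - 1) x \<partial>M)) * ga"
    by (simp only: e)
  also have "\<dots> = (\<integral>x. Ind (S - {j}) (r - 1) x \<partial>M) * ga"
  proof -
    have h: "S - {j} \<subseteq> I" "i \<in> S - {j}" using S i ij by auto
    show ?thesis using P0[OF h, of "r - 1"] by simp
  qed
  also have "\<dots> = (\<integral>x. Ind S r x * a (x j) \<partial>M)" by (rule P1[OF S j, symmetric])
  finally show ?thesis .
qed

lemma Pair:
  fixes f g :: "'a \<Rightarrow> real"
  assumes S: "S \<subseteq> I" and i: "i \<in> S" and j: "j \<in> S" and ij: "i \<noteq> j"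
    and fm: "f \<in> borel_measurable U" and gm: "g \<in> borel_measurable U"
    and fb: "\<And>u. \<bar>f u\<bar> \<le> 1" and gb: "\<And>u. \<bar>g u\<bar> \<le> 1"
    and fa: "\<And>u. f u \<noteq> 0 \<Longrightarrow> a u = 1" and ga': "\<And>u. g u \<noteq> 0 \<Longrightarrow> a u = 1"
  shows "(\<integral>x. Ind S r x * (f (x i) * g (x j)) \<partial>M)
     = (\<integral>x. Ind (S - {i} - {j}) (r - 2) x \<partial>M) * (\<integral>u. f u \<partial>U) * (\<integral>u. g u \<partial>U)"
proof -
  have fS: "finite S" using S finI finite_subset by blast
  have iI: "i \<in> I" and jI: "j \<in> I" using S i j by auto
  have S': "S - {i} - {j} \<subseteq> I" using S by auto
  have j': "j \<in> S - {i}" using j ij by auto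
  have cr: "cnt S x = cnt (S - {i} - {j}) x + a (x i) + a (x j)" for x
    using cnt_remove[OF fS i, of x] cnt_remove[of "S - {i}" j x] fS j' by simp
  have "(\<integral>x. Ind S r x * (f (x i) * g (x j)) \<partial>M) = (\<integral>x. (Ind (S - {i} - {j}) (r - 2) x * g (x j)) * f (x i) \<partial>M)"
  proof (rule Bochner_Integration.integral_cong[OF refl])
    fix x
    show "Ind S r x * (f (x i) * g (x j)) = (Ind (S - {i} - {j}) (r - 2) x * g (x j)) * f (x i)"
    proof (cases "f (x i) = 0 \<or> g (x j) = 0")
      case True then show ?thesis by auto
    next
      case False
      then have "a (x i) = 1" "a (x j) = 1" using fa ga' by auto
      then show ?thesis using cr[of x] unfolding Ind_def by auto
    qed
  qed
  also have "\<dots> = (\<integral>x. Ind (S - {i} - {j}) (r - 2) x * g (x j) \<partial>M) * (\<integral>u. f u \<partial>U)"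
  proof (rule indep[OF iI _ _ fm fb, where B=1])
    show "(\<lambda>x. Ind (S - {i} - {j}) (r - 2) x * g (x j)) \<in> borel_measurable M"
      by (intro borel_measurable_times Ind_meas S' comp_meas jI gm)
    show "\<bar>Ind (S - {i} - {j}) (r - 2) x * g (x j)\<bar> \<le> 1" for x
      by (simp add: abs_mult mult_le_one Ind_bd gb)
    show "Ind (S - {i} - {j}) (r - 2) (x(i := y)) * g ((x(i := y)) j) = Ind (S - {i} - {j}) (r - 2) x * g (x j)" for x y
      using ij by (simp add: Ind_upd)
  qed
  also have "(\<integral>x. Ind (S - {i} - {j}) (r - 2) x * g (x j) \<partial>M) = (\<integral>x. Ind (S - {i} - {j}) (r - 2) x \<partial>M) * (\<integral>u. g u \<partial>U)"
    by (rule indep[OF jI Ind_meas[OF S'] Ind_bd gm gb]) (simp add: Ind_upd)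
  finally show ?thesis by simp
qed

lemma int_Ind_cnt:
  assumes S: "S \<subseteq> I" and T: "T \<subseteq> I"
  shows "(\<integral>x. Ind T r x * cnt S x \<partial>M) = (\<Sum>i\<in>S. \<integral>x. Ind T r x * a (x i) \<partial>M)"
proof -
  have fS: "finite S" using S finI finite_subset by blast
  have "(\<integral>x. Ind T r x * cnt S x \<partial>M) = (\<integral>x. (\<Sum>i\<in>S. Ind T r x * a (x i)) \<partial>M)"
    unfolding cnt_def by (simp add: sum_distrib_left)
  also have "\<dots> = (\<Sum>i\<in>S. \<integral>x. Ind T r x * a (x i) \<partial>M)"
    by (rule Bochner_Integration.integral_sum) (use S in \<open>auto intro!: intg_Ind_f[OF T] a_bd\<close>)
  finally show ?thesis .
qed

lemma Ind_cnt_bd: "finite S \<Longrightarrow> \<bar>Ind T r x * cnt S x\<bar> \<le> real (card S)"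
  using Ind_bd[of T r x] cnt_bd[of S x] by (simp add: abs_mult mult_le_one order.trans[OF mult_left_le_one_le])

lemma Ind_cnt: "Ind S r x * cnt S x = r * Ind S r x"
  unfolding Ind_def by auto

lemma G1:
  assumes E: "E \<subseteq> R" and R: "R \<subseteq> I" and Rne: "R \<noteq> {}"
  shows "(\<integral>x. Ind R m x * (cnt R x - cnt E x) \<partial>M) = (1 - real (card E) / real (card R)) * m * (\<integral>x. Ind R m x \<partial>M)"
proof -
  have fR: "finite R" using R finI finite_subset by blast
  obtain i0 where i0: "i0 \<in> R" using Rne by auto
  define q where "q = (\<integral>x. Ind R m x * a (x i0) \<partial>M)"
  have eq: "(\<integral>x. Ind R m x * a (x i) \<partial>M) = q" if "i \<in> R" for i
    using Sym[OF R that i0] that unfolding q_def by (cases "i = i0") auto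
  have ER: "E \<subseteq> I" using E R by auto
  have cR: "(\<integral>x. Ind R m x * cnt R x \<partial>M) = real (card R) * q"
    using int_Ind_cnt[OF R R] eq by simp
  have cE: "(\<integral>x. Ind R m x * cnt E x \<partial>M) = real (card E) * q"
    using int_Ind_cnt[OF ER R] eq E by (simp add: subset_eq)
  have mP: "(\<integral>x. Ind R m x * cnt R x \<partial>M) = m * (\<integral>x. Ind R m x \<partial>M)"
    by (simp add: Ind_cnt)
  have "(\<integral>x. Ind R m x * (cnt R x - cnt E x) \<partial>M) = (\<integral>x. Ind R m x * cnt R x \<partial>M) - (\<integral>x. Ind R m x * cnt E x \<partial>M)"
    unfolding right_diff_distrib
  proof (rule Bochner_Integration.integral_diff)
    show "integrable M (\<lambda>x. Ind R m x * cnt R x)"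
      by (rule intg[where B="real (card R)"]) (auto intro!: borel_measurable_times Ind_meas cnt_meas R Ind_cnt_bd fR)
    show "integrable M (\<lambda>x. Ind R m x * cnt E x)"
      by (rule intg[where B="real (card E)"]) (auto intro!: borel_measurable_times Ind_meas cnt_meas R ER Ind_cnt_bd finite_subset[OF E fR])
  qed
  also have "\<dots> = (real (card R) - real (card E)) * q" using cR cE by (simp add: algebra_simps)
  also have "\<dots> = (1 - real (card E) / real (card R)) * (real (card R) * q)"
    using fR Rne by (simp add: field_simps)
  finally show ?thesis using cR mP by simp
qed

lemma b_imp: "b u \<noteq> 0 \<Longrightarrow> a u = 1"
  using abc[of u] b01[of u] c01[of u] bc[of u] by auto
lemma c_imp: "c u \<noteq> 0 \<Longrightarrow> a u = 1"
  using abc[of u] b01[of u] c01[of u] bc[of u] by auto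
lemma a_imp: "a u \<noteq> 0 \<Longrightarrow> a u = 1"
  using a01[of u] by auto

lemma int_dd:
  fixes f :: "'i \<Rightarrow> 'i \<Rightarrow> ('i \<Rightarrow> 'a) \<Rightarrow> real"
  assumes fR: "finite R" and int: "\<And>i j. i \<in> R \<Longrightarrow> j \<in> R \<Longrightarrow> integrable M (f i j)"
  shows "(\<integral>x. (\<Sum>i\<in>R. \<Sum>j\<in>R - {i}. f i j x) \<partial>M) = (\<Sum>i\<in>R. \<Sum>j\<in>R - {i}. \<integral>x. f i j x \<partial>M)"
proof -
  have "(\<integral>x. (\<Sum>i\<in>R. \<Sum>j\<in>R - {i}. f i j x) \<partial>M) = (\<Sum>i\<in>R. \<integral>x. (\<Sum>j\<in>R - {i}. f i j x) \<partial>M)"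
    by (rule Bochner_Integration.integral_sum) (use int in auto)
  also have "\<dots> = (\<Sum>i\<in>R. \<Sum>j\<in>R - {i}. \<integral>x. f i j x \<partial>M)"
    by (intro sum.cong refl Bochner_Integration.integral_sum) (use int in auto)
  finally show ?thesis .
qed

lemma G2:
  assumes R: "R \<subseteq> I"
  shows "\<exists>S. (\<integral>x. Ind R m x * ((\<Sum>l\<in>R. b (x l)) * (cnt R x - (\<Sum>l\<in>R. b (x l)))) \<partial>M) = gb * gc * S
       \<and> m * (m - 1) * (\<integral>x. Ind R m x \<partial>M) = ga * ga * S"
proof -
  have fR: "finite R" using R finI finite_subset by blast
  define J where "J i j = (\<integral>x. Ind (R - {i} - {j}) (m - 2) x \<partial>M)" for i j
  have pw1: "(\<Sum>l\<in>R. b (x l)) * (cnt R x - (\<Sum>l\<in>R. b (x l))) = (\<Sum>i\<in>R. \<Sum>j\<in>R - {i}. b (x i) * c (x j))" for x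
  proof -
    have "cnt R x - (\<Sum>l\<in>R. b (x l)) = (\<Sum>l\<in>R. c (x l))"
      unfolding cnt_def abc by (simp add: sum.distrib)
    then have "(\<Sum>l\<in>R. b (x l)) * (cnt R x - (\<Sum>l\<in>R. b (x l))) = (\<Sum>i\<in>R. \<Sum>j\<in>R. b (x i) * c (x j))"
      by (simp add: sum_product)
    also have "\<dots> = (\<Sum>i\<in>R. \<Sum>j\<in>R - {i}. b (x i) * c (x j))"
    proof (rule sum.cong[OF refl])
      fix i assume i: "i \<in> R"
      show "(\<Sum>j\<in>R. b (x i) * c (x j)) = (\<Sum>j\<in>R - {i}. b (x i) * c (x j))"
        using sum.remove[OF fR i, of "\<lambda>j. b (x i) * c (x j)"] bc[of "x i"] by simp
    qed
    finally show ?thesis .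
  qed
  have pw2: "cnt R x * (cnt R x - 1) = (\<Sum>i\<in>R. \<Sum>j\<in>R - {i}. a (x i) * a (x j))" for x
  proof -
    have aa: "a u * a u = a u" for u using a01[of u] by auto
    have "cnt R x * cnt R x = (\<Sum>i\<in>R. \<Sum>j\<in>R. a (x i) * a (x j))"
      unfolding cnt_def by (simp add: sum_product)
    also have "\<dots> = (\<Sum>i\<in>R. a (x i) + (\<Sum>j\<in>R - {i}. a (x i) * a (x j)))"
      by (intro sum.cong refl) (simp add: sum.remove[OF fR] aa)
    also have "\<dots> = cnt R x + (\<Sum>i\<in>R. \<Sum>j\<in>R - {i}. a (x i) * a (x j))"
      unfolding cnt_def by (simp add: sum.distrib)
    finally show ?thesis by (simp add: algebra_simps)
  qed
  have intf: "integrable M (\<lambda>x. Ind R m x * (f (x i) * g (x j)))"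
    if "i \<in> R" "j \<in> R" "f \<in> borel_measurable U" "g \<in> borel_measurable U"
       "\<And>u. \<bar>f u\<bar> \<le> 1" "\<And>u. \<bar>g u\<bar> \<le> 1" for i j and f g :: "'a \<Rightarrow> real"
  proof (rule intg[where B=1])
    show "(\<lambda>x. Ind R m x * (f (x i) * g (x j))) \<in> borel_measurable M"
      using that R by (intro borel_measurable_times Ind_meas comp_meas) auto
    show "\<bar>Ind R m x * (f (x i) * g (x j))\<bar> \<le> 1" for x
      using that Ind_bd[of R m x] by (simp add: abs_mult mult_le_one)
  qed
  have L: "(\<integral>x. Ind R m x * ((\<Sum>l\<in>R. b (x l)) * (cnt R x - (\<Sum>l\<in>R. b (x l)))) \<partial>M)
      = (\<Sum>i\<in>R. \<Sum>j\<in>R - {i}. J i j * gb * gc)"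
  proof -
    have "(\<integral>x. Ind R m x * ((\<Sum>l\<in>R. b (x l)) * (cnt R x - (\<Sum>l\<in>R. b (x l)))) \<partial>M)
       = (\<integral>x. (\<Sum>i\<in>R. \<Sum>j\<in>R - {i}. Ind R m x * (b (x i) * c (x j))) \<partial>M)"
      by (simp add: pw1 sum_distrib_left)
    also have "\<dots> = (\<Sum>i\<in>R. \<Sum>j\<in>R - {i}. \<integral>x. Ind R m x * (b (x i) * c (x j)) \<partial>M)"
      by (rule int_dd[OF fR]) (rule intf, auto intro: b_bd c_bd)
    also have "\<dots> = (\<Sum>i\<in>R. \<Sum>j\<in>R - {i}. J i j * gb * gc)"
      unfolding J_def gb_def gc_def
      by (intro sum.cong refl Pair R) (auto intro: b_bd c_bd b_imp c_imp)
    finally show ?thesis .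
  qed
  have Rr: "m * (m - 1) * (\<integral>x. Ind R m x \<partial>M) = (\<Sum>i\<in>R. \<Sum>j\<in>R - {i}. J i j * ga * ga)"
  proof -
    have "(\<integral>x. Ind R m x * (cnt R x * (cnt R x - 1)) \<partial>M) = (\<integral>x. m * (m - 1) * Ind R m x \<partial>M)"
      by (rule Bochner_Integration.integral_cong) (auto simp: Ind_def)
    then have "m * (m - 1) * (\<integral>x. Ind R m x \<partial>M) = (\<integral>x. Ind R m x * (cnt R x * (cnt R x - 1)) \<partial>M)"
      by simp
    also have "\<dots> = (\<integral>x. (\<Sum>i\<in>R. \<Sum>j\<in>R - {i}. Ind R m x * (a (x i) * a (x j))) \<partial>M)"
      by (simp add: pw2 sum_distrib_left)
    also have "\<dots> = (\<Sum>i\<in>R. \<Sum>j\<in>R - {i}. \<integral>x. Ind R m x * (a (x i) * a (x j)) \<partial>M)"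
      by (rule int_dd[OF fR]) (rule intf, auto intro: a_bd)
    also have "\<dots> = (\<Sum>i\<in>R. \<Sum>j\<in>R - {i}. J i j * ga * ga)"
      unfolding J_def ga_def
      by (intro sum.cong refl Pair R) (auto intro: a_bd a_imp)
    finally show ?thesis .
  qed
  show ?thesis unfolding L Rr
    by (rule exI[of _ "\<Sum>i\<in>R. \<Sum>j\<in>R - {i}. J i j"]) (simp add: sum_distrib_left sum_distrib_right algebra_simps)
qed

lemma g_facts: "0 \<le> gb" "0 \<le> gc" "ga = gb + gc"
proof -
  have bn: "0 \<le> b u" for u using b01[of u] by auto
  have cn: "0 \<le> c u" for u using c01[of u] by auto
  show "0 \<le> gb" unfolding gb_def by (rule Bochner_Integration.integral_nonneg) (rule bn)
  show "0 \<le> gc" unfolding gc_def by (rule Bochner_Integration.integral_nonneg) (rule cn)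
  show "ga = gb + gc" unfolding ga_def gb_def gc_def abc
    by (rule Bochner_Integration.integral_add; rule intgU[where B=1]) (auto intro: b_bd c_bd)
qed

lemma G2':
  assumes R: "R \<subseteq> I"
  shows "(\<integral>x. Ind R m x * ((\<Sum>l\<in>R. b (x l)) * (cnt R x - (\<Sum>l\<in>R. b (x l)))) \<partial>M)
       = (gb / ga) * (1 - gb / ga) * (m * (m - 1) * (\<integral>x. Ind R m x \<partial>M))"
proof -
  obtain S where S: "(\<integral>x. Ind R m x * ((\<Sum>l\<in>R. b (x l)) * (cnt R x - (\<Sum>l\<in>R. b (x l)))) \<partial>M) = gb * gc * S"
      "m * (m - 1) * (\<integral>x. Ind R m x \<partial>M) = ga * ga * S" using G2[OF R, of m] by blast
  show ?thesis
  proof (cases "ga = 0")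
    case True
    then have "gb = 0" using g_facts by auto
    then show ?thesis using S True by simp
  next
    case False
    have e: "1 - gb / ga = gc / ga" using False g_facts(3) by (simp add: field_simps)
    have "gb * gc * S = (gb / ga) * (gc / ga) * (ga * ga * S)" using False by (simp add: field_simps)
    then show ?thesis unfolding S e by simp
  qed
qed

lemma ED:
  assumes E: "E \<subseteq> I"
  shows "(\<integral>x. cnt E x \<partial>M) = real (card E) * ga"
proof -
  have fE: "finite E" using E finI finite_subset by blast
  have "(\<integral>x. cnt E x \<partial>M) = (\<Sum>i\<in>E. \<integral>x. a (x i) \<partial>M)"
    unfolding cnt_def
    by (rule Bochner_Integration.integral_sum) (use E in \<open>auto intro!: intg[where B=1] comp_meas a_bd\<close>)
  also have "\<dots> = (\<Sum>i\<in>E. ga)"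
  proof (rule sum.cong[OF refl])
    fix i assume i: "i \<in> E"
    have "(\<integral>x. (\<lambda>_. 1::real) x * a (x i) \<partial>M) = (\<integral>x. (\<lambda>_. 1::real) x \<partial>M) * ga"
      unfolding ga_def by (rule indep[where B=1 and C=1]) (use i E in \<open>auto intro: a_bd\<close>)
    then show "(\<integral>x. a (x i) \<partial>M) = ga" using prob_space.prob_space[OF Mprob] by simp
  qed
  finally show ?thesis by simp
qed

lemma second_moment:
  fixes Y :: "'i \<Rightarrow> 'a \<Rightarrow> real"
  assumes Ym: "\<And>i. Y i \<in> borel_measurable U" and Yb: "\<And>i u. \<bar>Y i u\<bar> \<le> 1"
    and Y0: "\<And>i. (\<integral>u. Y i u \<partial>U) = 0"
  shows "(\<integral>x. (\<Sum>i\<in>I. Y i (x i))\<^sup>2 \<partial>M) \<le> real (card I)"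
proof -
  have intYY: "integrable M (\<lambda>x. Y i (x i) * Y j (x j))" if "i \<in> I" "j \<in> I" for i j
    by (rule intg[where B=1]) (use that Yb in \<open>auto intro!: borel_measurable_times comp_meas Ym simp: abs_mult mult_le_one\<close>)
  have "(\<integral>x. (\<Sum>i\<in>I. Y i (x i))\<^sup>2 \<partial>M) = (\<integral>x. (\<Sum>i\<in>I. \<Sum>j\<in>I. Y i (x i) * Y j (x j)) \<partial>M)"
    by (simp add: power2_eq_square sum_product)
  also have "\<dots> = (\<Sum>i\<in>I. \<Sum>j\<in>I. \<integral>x. Y i (x i) * Y j (x j) \<partial>M)"
  proof -
    have "(\<integral>x. (\<Sum>i\<in>I. \<Sum>j\<in>I. Y i (x i) * Y j (x j)) \<partial>M) = (\<Sum>i\<in>I. \<integral>x. (\<Sum>j\<in>I. Y i (x i) * Y j (x j)) \<partial>M)"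
      by (rule Bochner_Integration.integral_sum) (use intYY in auto)
    also have "\<dots> = (\<Sum>i\<in>I. \<Sum>j\<in>I. \<integral>x. Y i (x i) * Y j (x j) \<partial>M)"
      by (intro sum.cong refl Bochner_Integration.integral_sum) (use intYY in auto)
    finally show ?thesis .
  qed
  also have "\<dots> \<le> (\<Sum>i\<in>I. 1)"
  proof (rule sum_mono)
    fix i assume i: "i \<in> I"
    have z: "(\<integral>x. Y i (x i) * Y j (x j) \<partial>M) = 0" if "j \<in> I" "j \<noteq> i" for j
    proof -
      have "(\<integral>x. Y j (x j) * Y i (x i) \<partial>M) = (\<integral>x. Y j (x j) \<partial>M) * (\<integral>u. Y i u \<partial>U)"
        by (rule indep[where B=1 and C=1]) (use i that Yb in \<open>auto intro: comp_meas Ym\<close>)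
      then show ?thesis by (simp add: Y0 mult.commute)
    qed
    have "(\<Sum>j\<in>I. \<integral>x. Y i (x i) * Y j (x j) \<partial>M) = (\<integral>x. Y i (x i) * Y i (x i) \<partial>M)"
      using sum.remove[OF finI i, of "\<lambda>j. \<integral>x. Y i (x i) * Y j (x j) \<partial>M"] z by simp
    also have "\<dots> \<le> (\<integral>x. 1 \<partial>M)"
    proof (rule Bochner_Integration.integral_mono[OF intYY[OF i i]])
      show "integrable M (\<lambda>x. 1::real)" by (rule intg[where B=1]) auto
      show "Y i (x i) * Y i (x i) \<le> 1" for x
        using Yb[of i "x i"] by (simp add: abs_le_iff) (smt (verit) mult_le_one mult_minus_left mult_minus_right)
    qed
    also have "\<dots> = 1" using prob_space.prob_space[OF Mprob] by simp
    finally show "(\<Sum>j\<in>I. \<integral>x. Y i (x i) * Y j (x j) \<partial>M) \<le> 1" .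
  qed
  finally show ?thesis by simp
qed

end



definition ccf :: "bool \<times> ennreal \<times> ennreal \<Rightarrow> ennreal" where
  "ccf u = (if fst u then fst (snd u) else snd (snd u))"
definition Af :: "real \<Rightarrow> bool \<times> ennreal \<times> ennreal \<Rightarrow> real" where
  "Af t u = (if ennreal t \<le> ccf u then 1 else 0)"
definition Bf :: "real \<Rightarrow> bool \<times> ennreal \<times> ennreal \<Rightarrow> real" where
  "Bf t u = (if fst u \<and> ennreal t \<le> ccf u then 1 else 0)"
definition Cf :: "real \<Rightarrow> bool \<times> ennreal \<times> ennreal \<Rightarrow> real" where
  "Cf t u = (if \<not> fst u \<and> ennreal t \<le> ccf u then 1 else 0)"

locale unit_setting =
  fixes p :: real and \<mu> :: "(ennreal \<times> ennreal) measure"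
  assumes p0: "0 < p" and p1: "p < 1" and mu_prob: "prob_space \<mu>" and mu_sets: "sets \<mu> = sets borel"
begin

lemma U_prob: "prob_space (unit_law p \<mu>)"
  unfolding unit_law_def by (intro prob_space_pair prob_space_measure_pmf mu_prob)

lemma sets_U: "sets (unit_law p \<mu>) = sets (count_space UNIV \<Otimes>\<^sub>M ((borel :: ennreal measure) \<Otimes>\<^sub>M (borel :: ennreal measure)))"
proof -
  have "sets \<mu> = sets ((borel :: ennreal measure) \<Otimes>\<^sub>M (borel :: ennreal measure))"
    by (simp only: mu_sets borel_prod)
  then show ?thesis unfolding unit_law_def by (intro sets_pair_measure_cong) simp_all
qed

lemma ccf_meas: "ccf \<in> borel_measurable (unit_law p \<mu>)"
proof -
  have "ccf \<in> borel_measurable (count_space UNIV \<Otimes>\<^sub>M ((borel :: ennreal measure) \<Otimes>\<^sub>M (borel :: ennreal measure)))"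
    unfolding ccf_def by measurable
  then show ?thesis by (subst measurable_cong_sets[OF sets_U refl])
qed

lemma fst_meas: "(\<lambda>u. fst u) \<in> measurable (unit_law p \<mu>) (count_space UNIV)"
proof -
  have "(\<lambda>u::bool \<times> ennreal \<times> ennreal. fst u) \<in> measurable (count_space UNIV \<Otimes>\<^sub>M ((borel :: ennreal measure) \<Otimes>\<^sub>M (borel :: ennreal measure))) (count_space UNIV)"
    by measurable
  then show ?thesis by (subst measurable_cong_sets[OF sets_U refl])
qed

lemma Af_meas: "Af t \<in> borel_measurable (unit_law p \<mu>)"
  using ccf_meas fst_meas unfolding Af_def by measurable
lemma ind_fst_meas: "(\<lambda>u. if fst u then 1 else (0::real)) \<in> borel_measurable (unit_law p \<mu>)"
  using fst_meas by measurable

lemma Bf_meas: "Bf t \<in> borel_measurable (unit_law p \<mu>)"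
proof -
  have "Bf t = (\<lambda>u. (if fst u then 1 else 0) * Af t u)" by (rule ext) (simp add: Bf_def Af_def)
  then show ?thesis using borel_measurable_times[OF ind_fst_meas Af_meas] by simp
qed
lemma Cf_meas: "Cf t \<in> borel_measurable (unit_law p \<mu>)"
proof -
  have "Cf t = (\<lambda>u. (1 - (if fst u then 1 else 0)) * Af t u)" by (rule ext) (simp add: Cf_def Af_def)
  then show ?thesis using borel_measurable_times[OF borel_measurable_diff[OF borel_measurable_const ind_fst_meas] Af_meas] by simp
qed

lemma setting: "cnt_setting (unit_law p \<mu>) {..<(n::nat)} (Af t) (Bf t) (Cf t)"
proof (rule cnt_setting.intro)
  show "prob_space (unit_law p \<mu>)" by (rule U_prob)
  show "finite {..<n}" by simp
  show "Af t \<in> borel_measurable (unit_law p \<mu>)" by (rule Af_meas)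
  show "Bf t \<in> borel_measurable (unit_law p \<mu>)" by (rule Bf_meas)
  show "Cf t \<in> borel_measurable (unit_law p \<mu>)" by (rule Cf_meas)
  show "Af t u = Bf t u + Cf t u" for u by (simp add: Af_def Bf_def Cf_def)
  show "Bf t u = 0 \<or> Bf t u = 1" for u by (simp add: Bf_def)
  show "Cf t u = 0 \<or> Cf t u = 1" for u by (simp add: Cf_def)
  show "Bf t u * Cf t u = 0" for u by (simp add: Bf_def Cf_def)
qed

lemma U_fin: "finite_measure (unit_law p \<mu>)"
  using U_prob by (rule prob_space.finite_measure)

lemma int_pair:
  fixes f :: "bool \<times> ennreal \<times> ennreal \<Rightarrow> real"
  assumes fm: "f \<in> borel_measurable (unit_law p \<mu>)" and fb: "\<And>u. \<bar>f u\<bar> \<le> 1"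
  shows "(\<integral>u. f u \<partial>unit_law p \<mu>) = (\<integral>y. f (True, y) \<partial>\<mu>) * p + (\<integral>y. f (False, y) \<partial>\<mu>) * (1 - p)"
proof -
  interpret P: pair_prob_space "measure_pmf (bernoulli_pmf p)" \<mu>
    by (intro pair_prob_space.intro pair_sigma_finite.intro prob_space_imp_sigma_finite prob_space_measure_pmf mu_prob)
  have int: "integrable (measure_pmf (bernoulli_pmf p) \<Otimes>\<^sub>M \<mu>) f"
    using finite_measure.integrable_const_bound[OF U_fin, of f 1] fm fb unfolding unit_law_def by auto
  have "(\<integral>u. f u \<partial>unit_law p \<mu>) = (\<integral>x. (\<integral>y. f (x, y) \<partial>\<mu>) \<partial>measure_pmf (bernoulli_pmf p))"
    unfolding unit_law_def using P.integral_fst'[OF int] by simp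
  also have "\<dots> = (\<integral>y. f (True, y) \<partial>\<mu>) * p + (\<integral>y. f (False, y) \<partial>\<mu>) * (1 - p)"
    using p0 p1 by simp
  finally show ?thesis .
qed

lemma int_ind_mu: "(\<integral>y. (if ennreal t \<le> g y then 1 else 0) \<partial>\<mu>) = measure \<mu> {y \<in> space \<mu>. ennreal t \<le> g y}"
proof -
  have "(\<integral>y. (if ennreal t \<le> g y then 1 else 0) \<partial>\<mu>) = (\<integral>y. indicator {y. ennreal t \<le> g y} y \<partial>\<mu>)"
    by (intro Bochner_Integration.integral_cong) (auto simp: indicator_def)
  also have "\<dots> = measure \<mu> {y \<in> space \<mu>. ennreal t \<le> g y}"
    by (simp add: Int_def conj_commute)
  finally show ?thesis .
qed

lemma int_Bf: "(\<integral>u. Bf t u \<partial>unit_law p \<mu>) = p * Gz \<mu> True t"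
  by (subst int_pair) (auto simp: Bf_meas Bf_def ccf_def Gz_def int_ind_mu)

lemma int_Cf: "(\<integral>u. Cf t u \<partial>unit_law p \<mu>) = (1 - p) * Gz \<mu> False t"
  by (subst int_pair) (auto simp: Cf_meas Cf_def ccf_def Gz_def int_ind_mu)

lemma int_Af: "(\<integral>u. Af t u \<partial>unit_law p \<mu>) = Gmix p \<mu> t"
proof -
  have "(\<integral>u. Af t u \<partial>unit_law p \<mu>) = (\<integral>u. Bf t u + Cf t u \<partial>unit_law p \<mu>)"
    by (intro Bochner_Integration.integral_cong) (auto simp: Af_def Bf_def Cf_def)
  also have "\<dots> = (\<integral>u. Bf t u \<partial>unit_law p \<mu>) + (\<integral>u. Cf t u \<partial>unit_law p \<mu>)"
    by (intro Bochner_Integration.integral_add finite_measure.integrable_const_bound[OF U_fin, where B=1] Bf_meas Cf_meas)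
       (auto simp: Bf_def Cf_def)
  finally show ?thesis by (simp add: int_Bf int_Cf Gmix_def)
qed

end



lemma card_sum: "finite A \<Longrightarrow> real (card {i\<in>A. P i}) = (\<Sum>i\<in>A. if P i then 1 else 0)"
  by (simp add: sum.inter_filter[symmetric])

locale pop_setting = unit_setting +
  fixes n :: nat and T1 T0 :: "nat \<Rightarrow> real"
  assumes T0nn: "\<And>i. i < n \<Longrightarrow> 0 \<le> T0 i" and H0: "\<And>i. i < n \<Longrightarrow> T1 i = T0 i"
begin

abbreviation "K \<equiv> Ktimes n T0"
abbreviation "tt k \<equiv> tk n T0 k"
definition "RR k = {i. i < n \<and> tt k \<le> T0 i}"
definition "EE k = {i. i < n \<and> T0 i = tt k}"

lemma fin_img: "finite (T0 ` {..<n})" by simp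

lemma tt_mem: "k \<in> {1..K} \<Longrightarrow> tt k \<in> T0 ` {..<n}"
proof -
  assume k: "k \<in> {1..K}"
  then have "k - 1 < length (sorted_list_of_set (T0 ` {..<n}))"
    by (auto simp: Ktimes_def)
  then have "tt k \<in> set (sorted_list_of_set (T0 ` {..<n}))"
    unfolding tk_def by (rule nth_mem)
  then show ?thesis by simp
qed

lemma tt_inj: "inj_on tt {1..K}"
proof (rule inj_onI)
  fix k k' assume k: "k \<in> {1..K}" and k': "k' \<in> {1..K}" and e: "tt k = tt k'"
  have d: "distinct (sorted_list_of_set (T0 ` {..<n}))" by simp
  have "k - 1 < length (sorted_list_of_set (T0 ` {..<n}))" "k' - 1 < length (sorted_list_of_set (T0 ` {..<n}))"
    using k k' by (auto simp: Ktimes_def)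
  then have "k - 1 = k' - 1" using e nth_eq_iff_index_eq[OF d] unfolding tk_def by blast
  then show "k = k'" using k k' by auto
qed

lemma tt_nn: "k \<in> {1..K} \<Longrightarrow> 0 \<le> tt k"
proof -
  assume "k \<in> {1..K}"
  then obtain i where "i < n" "tt k = T0 i" using tt_mem by blast
  then show ?thesis using T0nn by simp
qed

lemma EE_ne: "k \<in> {1..K} \<Longrightarrow> EE k \<noteq> {}"
  using tt_mem unfolding EE_def by force

lemma EE_sub: "EE k \<subseteq> RR k" unfolding EE_def RR_def by auto
lemma RR_sub: "RR k \<subseteq> {..<n}" unfolding RR_def by auto
lemma EE_subI: "EE k \<subseteq> {..<n}" unfolding EE_def by auto
lemma RR_fin: "finite (RR k)" using RR_sub finite_subset by blast
lemma EE_fin: "finite (EE k)" using EE_subI finite_subset by blast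

lemma Tr_eq: "i < n \<Longrightarrow> Tr T1 T0 x i = T0 i"
  using H0 by (simp add: Tr_def)

lemma Cr_eq: "Cr x i = ccf (x i)"
  by (simp add: Cr_def Zr_def ccf_def)

lemma Nk_eq: assumes k: "k \<in> {1..K}" shows "Nk n T1 T0 k x = (\<Sum>i\<in>RR k. Af (tt k) (x i))"
proof -
  have "{i. i < n \<and> ennreal (tt k) \<le> Wr T1 T0 x i} = {i \<in> RR k. ennreal (tt k) \<le> ccf (x i)}"
    using T0nn by (auto simp: RR_def Wr_def Tr_eq Cr_eq ennreal_le_iff)
  then show ?thesis unfolding Nk_def using card_sum[OF RR_fin] by (simp add: Af_def)
qed

lemma N1k_eq: assumes k: "k \<in> {1..K}" shows "N1k n T1 T0 k x = (\<Sum>i\<in>RR k. Bf (tt k) (x i))"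
proof -
  have "{i. i < n \<and> Zr x i \<and> ennreal (tt k) \<le> Wr T1 T0 x i} = {i \<in> RR k. fst (x i) \<and> ennreal (tt k) \<le> ccf (x i)}"
    using T0nn by (auto simp: RR_def Wr_def Tr_eq Cr_eq ennreal_le_iff Zr_def)
  then show ?thesis unfolding N1k_def using card_sum[OF RR_fin] by (simp add: Bf_def)
qed

lemma Dk_eq: assumes k: "k \<in> {1..K}" shows "Dk n T1 T0 k x = (\<Sum>i\<in>EE k. Af (tt k) (x i))"
proof -
  have "{i. i < n \<and> Delta T1 T0 x i \<and> Wr T1 T0 x i = ennreal (tt k)} = {i \<in> EE k. ennreal (tt k) \<le> ccf (x i)}"
  proof (intro set_eqI iffI)
    fix i assume "i \<in> {i. i < n \<and> Delta T1 T0 x i \<and> Wr T1 T0 x i = ennreal (tt k)}"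
    then have i: "i < n" "ennreal (T0 i) \<le> ccf (x i)" "min (ennreal (T0 i)) (ccf (x i)) = ennreal (tt k)"
      by (auto simp: Delta_def Wr_def Tr_eq Cr_eq)
    then have "ennreal (T0 i) = ennreal (tt k)" by (simp add: min_def)
    then have "T0 i = tt k" using T0nn[OF i(1)] tt_nn[OF k] by simp
    then show "i \<in> {i \<in> EE k. ennreal (tt k) \<le> ccf (x i)}" using i by (auto simp: EE_def)
  next
    fix i assume "i \<in> {i \<in> EE k. ennreal (tt k) \<le> ccf (x i)}"
    then show "i \<in> {i. i < n \<and> Delta T1 T0 x i \<and> Wr T1 T0 x i = ennreal (tt k)}"
      by (auto simp: EE_def Delta_def Wr_def Tr_eq Cr_eq min_def)
  qed
  then show ?thesis unfolding Dk_def using card_sum[OF EE_fin] by (simp add: Af_def)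
qed

definition "cst k = (1 - hk n T0 k) * phik n p \<mu> T0 k * (1 - phik n p \<mu> T0 k)"

lemma PK:
  assumes k: "k \<in> {1..K}" and w: "\<omega> \<in> space (pop_space n p \<mu>)"
    and P: "measure (pop_space n p \<mu>) {x \<in> space (pop_space n p \<mu>). Nk n T1 T0 k x = Nk n T1 T0 k \<omega>} \<noteq> 0"
  shows "xi3 n p \<mu> T1 T0 k \<omega> = cst k * (Dk n T1 T0 k \<omega> - real (card (EE k)) * Gmix p \<mu> (tt k))
           - (if Nk n T1 T0 k \<omega> = 1 then cst k * Dk n T1 T0 k \<omega> else 0)"
proof -
  define t where "t = tt k"
  interpret C: cnt_setting "unit_law p \<mu>" "{..<n}" "Af t" "Bf t" "Cf t" by (rule setting)
  have Meq: "pop_space n p \<mu> = C.M" by (simp add: pop_space_def)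
  have Neq: "Nk n T1 T0 k = C.cnt (RR k)" by (rule ext) (simp add: Nk_eq[OF k, folded t_def] C.cnt_def)
  have Deq: "Dk n T1 T0 k = C.cnt (EE k)" by (rule ext) (simp add: Dk_eq[OF k, folded t_def] C.cnt_def)
  have N1eq: "N1k n T1 T0 k = (\<lambda>x. \<Sum>l\<in>RR k. Bf t (x l))" by (rule ext) (simp add: N1k_eq[OF k, folded t_def])
  define m where "m = C.cnt (RR k) \<omega>"
  define Pm where "Pm = (\<integral>x. C.Ind (RR k) m x \<partial>C.M)"
  have ind: "(\<integral>x. indicator {x \<in> space C.M. C.cnt (RR k) x = m} x * X x \<partial>C.M) = (\<integral>x. C.Ind (RR k) m x * X x \<partial>C.M)" for X
    by (rule Bochner_Integration.integral_cong) (auto simp: C.Ind_def indicator_def)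
  have meas: "measure C.M {x \<in> space C.M. C.cnt (RR k) x = m} = Pm"
  proof -
    have "Pm = (\<integral>x. indicator {x \<in> space C.M. C.cnt (RR k) x = m} x \<partial>C.M)"
      unfolding Pm_def by (rule Bochner_Integration.integral_cong) (auto simp: C.Ind_def indicator_def)
    then show ?thesis by (simp add: Int_absorb2)
  qed
  have Pm0: "Pm \<noteq> 0" using P unfolding Meq Neq meas m_def[symmetric] by (simp add: meas)
  have ga: "C.ga = Gmix p \<mu> t" unfolding C.ga_def by (rule int_Af)
  have gb: "C.gb = p * Gz \<mu> True t" unfolding C.gb_def by (rule int_Bf)
  have phi: "phik n p \<mu> T0 k = C.gb / C.ga" by (simp only: ga gb) (simp add: phik_def t_def)
  have hk: "hk n T0 k = real (card (EE k)) / real (card (RR k))"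
    unfolding hk_def dk_def nk_def EE_def RR_def ..
  have RRne: "RR k \<noteq> {}" using EE_ne[OF k] EE_sub by blast
  have CE1: "cond_exp_disc C.M (\<lambda>x. C.cnt (RR k) x - C.cnt (EE k) x) (C.cnt (RR k)) \<omega> = (1 - hk n T0 k) * m"
    unfolding cond_exp_disc_def m_def[symmetric] ind meas
    using C.G1[OF EE_sub RR_sub RRne, where m=m] Pm0 unfolding Pm_def[symmetric] hk by simp
  have CE2: "cond_exp_disc C.M (\<lambda>x. (\<Sum>l\<in>RR k. Bf t (x l)) * (C.cnt (RR k) x - (\<Sum>l\<in>RR k. Bf t (x l)))) (C.cnt (RR k)) \<omega>
      = phik n p \<mu> T0 k * (1 - phik n p \<mu> T0 k) * (m * (m - 1))"
    unfolding cond_exp_disc_def m_def[symmetric] ind meas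
    using C.G2'[OF RR_sub[of k], where m=m] Pm0 unfolding Pm_def[symmetric] phi by simp
  have ED: "(\<integral>x. C.cnt (EE k) x \<partial>C.M) = real (card (EE k)) * Gmix p \<mu> (tt k)"
    using C.ED[OF EE_subI] ga t_def by simp
  have Anonneg: "0 \<le> Af t u" for u by (simp add: Af_def)
  have DleN: "C.cnt (EE k) \<omega> \<le> m" unfolding m_def C.cnt_def
    by (rule sum_mono2[OF RR_fin EE_sub]) (simp add: Anonneg)
  have D0: "0 \<le> C.cnt (EE k) \<omega>" unfolding C.cnt_def by (simp add: Anonneg sum_nonneg)
  have xi: "xi3 n p \<mu> T1 T0 k \<omega> = C.cnt (EE k) \<omega> * ((1 - hk n T0 k) * m) * (phik n p \<mu> T0 k * (1 - phik n p \<mu> T0 k) * (m * (m - 1)))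
        / (m\<^sup>2 * (m - 1)) - real (card (EE k)) * Gmix p \<mu> (tt k) * (1 - hk n T0 k) * phik n p \<mu> T0 k * (1 - phik n p \<mu> T0 k)"
    unfolding xi3_def Let_def Meq Neq Deq N1eq CE1 CE2 ED m_def[symmetric] ..
  show ?thesis
  proof (cases "m = 1")
    case True
    then show ?thesis unfolding xi Neq Deq m_def[symmetric] cst_def by (simp add: algebra_simps)
  next
    case False
    note F = False
    show ?thesis
    proof (cases "m = 0")
      case True
      then have "C.cnt (EE k) \<omega> = 0" using DleN D0 by simp
      then show ?thesis unfolding xi Neq Deq m_def[symmetric] cst_def using True by (simp add: algebra_simps)
    next
      case False
      have "m\<^sup>2 * (m - 1) \<noteq> 0" using F False by simp
      then show ?thesis unfolding xi Neq Deq m_def[symmetric] cst_def using F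
        by (simp add: field_simps power2_eq_square)
    qed
  qed
qed

lemma Gmix_bd: "0 \<le> Gmix p \<mu> t \<and> Gmix p \<mu> t \<le> 1"
proof -
  interpret mu: prob_space \<mu> by (rule mu_prob)
  have "Gz \<mu> z t \<le> 1" "0 \<le> Gz \<mu> z t" for z unfolding Gz_def by auto
  then show ?thesis unfolding Gmix_def using p0 p1
    by (smt (verit) mult_left_le mult_nonneg_nonneg)
qed

lemma cst_bd: assumes k: "k \<in> {1..K}" shows "0 \<le> cst k \<and> cst k \<le> 1"
proof -
  define t where "t = tt k"
  interpret C: cnt_setting "unit_law p \<mu>" "{..<n}" "Af t" "Bf t" "Cf t" by (rule setting)
  have ga: "C.ga = Gmix p \<mu> t" unfolding C.ga_def by (rule int_Af)
  have gb: "C.gb = p * Gz \<mu> True t" unfolding C.gb_def by (rule int_Bf)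
  have phi: "phik n p \<mu> T0 k = C.gb / C.ga" by (simp only: ga gb) (simp add: phik_def t_def)
  have hk: "hk n T0 k = real (card (EE k)) / real (card (RR k))"
    unfolding hk_def dk_def nk_def EE_def RR_def ..
  have RRne: "RR k \<noteq> {}" using EE_ne[OF k] EE_sub by blast
  have cE: "card (EE k) \<le> card (RR k)" by (rule card_mono[OF RR_fin EE_sub])
  have cR: "0 < card (RR k)" using RRne RR_fin by (simp add: card_gt_0_iff)
  have h1: "0 \<le> 1 - hk n T0 k" "1 - hk n T0 k \<le> 1" unfolding hk using cE cR by (auto simp: field_simps)
  have f1: "0 \<le> phik n p \<mu> T0 k" "phik n p \<mu> T0 k \<le> 1"
    unfolding phi using C.g_facts by (auto simp: divide_le_eq_1)
  have "0 \<le> phik n p \<mu> T0 k * (1 - phik n p \<mu> T0 k)" "phik n p \<mu> T0 k * (1 - phik n p \<mu> T0 k) \<le> 1"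
    using f1 by (auto intro: mult_le_one)
  then show ?thesis unfolding cst_def using h1
    by (metis mult.assoc mult_le_one mult_nonneg_nonneg)
qed

lemma Nk_range: "Nk n T1 T0 k x \<in> real ` {..n}"
proof -
  have "card {i. i < n \<and> ennreal (tt k) \<le> Wr T1 T0 x i} \<le> card {..<n}"
    by (rule card_mono) auto
  then show ?thesis unfolding Nk_def by auto
qed

lemma Nk_meas: "k \<in> {1..K} \<Longrightarrow> Nk n T1 T0 k \<in> borel_measurable (pop_space n p \<mu>)"
proof -
  assume k: "k \<in> {1..K}"
  define t where "t = tt k"
  interpret C: cnt_setting "unit_law p \<mu>" "{..<n}" "Af t" "Bf t" "Cf t" by (rule setting)
  have Meq: "pop_space n p \<mu> = C.M" by (simp add: pop_space_def)
  have Neq: "Nk n T1 T0 k = C.cnt (RR k)" by (rule ext) (simp add: Nk_eq[OF k, folded t_def] C.cnt_def)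
  show ?thesis unfolding Meq Neq by (rule C.cnt_meas[OF RR_sub])
qed

lemma AE_pos:
  "AE \<omega> in pop_space n p \<mu>. \<forall>k\<in>{1..<K}.
     measure (pop_space n p \<mu>) {x \<in> space (pop_space n p \<mu>). Nk n T1 T0 k x = Nk n T1 T0 k \<omega>} \<noteq> 0"
proof (rule AE_finite_allI)
  show "finite {1..<K}" by simp
  fix k assume k': "k \<in> {1..<K}"
  then have k: "k \<in> {1..K}" by auto
  let ?M = "pop_space n p \<mu>"
  let ?N = "Nk n T1 T0 k"
  have Mfin: "finite_measure ?M"
  proof -
    define t where "t = tt k"
    interpret C: cnt_setting "unit_law p \<mu>" "{..<n}" "Af t" "Bf t" "Cf t" by (rule setting)
    show ?thesis using C.Mfin by (simp add: pop_space_def)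
  qed
  have Nm[measurable]: "?N \<in> borel_measurable ?M" by (rule Nk_meas[OF k])
  have "AE \<omega> in ?M. \<forall>v\<in>real ` {..n}. ?N \<omega> = v \<longrightarrow> measure ?M {x \<in> space ?M. ?N x = v} \<noteq> 0"
  proof (rule AE_finite_allI)
    show "finite (real ` {..n})" by simp
    fix v :: real
    show "AE \<omega> in ?M. ?N \<omega> = v \<longrightarrow> measure ?M {x \<in> space ?M. ?N x = v} \<noteq> 0"
    proof (cases "measure ?M {x \<in> space ?M. ?N x = v} = 0")
      case False then show ?thesis by simp
    next
      case True
      have sets: "{x \<in> space ?M. ?N x = v} \<in> sets ?M" by measurable
      have "{x \<in> space ?M. ?N x = v} \<in> null_sets ?M"
        using True sets finite_measure.emeasure_eq_measure[OF Mfin] by auto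
      then show ?thesis by (rule AE_I') (use True in auto)
    qed
  qed
  then show "AE \<omega> in ?M. measure ?M {x \<in> space ?M. ?N x = ?N \<omega>} \<noteq> 0"
    by (rule AE_mp) (use Nk_range in auto)
qed

lemma Af_nn: "0 \<le> Af t u" by (simp add: Af_def)

lemma no_two:
  assumes k1: "k1 \<in> {1..K}" and k2: "k2 \<in> {1..K}" and lt: "tt k1 < tt k2"
    and N1: "Nk n T1 T0 k1 x = 1" and D1: "Dk n T1 T0 k1 x \<noteq> 0" and D2: "Dk n T1 T0 k2 x \<noteq> 0"
  shows False
proof -
  obtain i1 where i1: "i1 \<in> EE k1" "Af (tt k1) (x i1) \<noteq> 0"
    using D1 unfolding Dk_eq[OF k1] by (rule sum.not_neutral_contains_not_neutral)
  obtain i2 where i2: "i2 \<in> EE k2" "Af (tt k2) (x i2) \<noteq> 0"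
    using D2 unfolding Dk_eq[OF k2] by (rule sum.not_neutral_contains_not_neutral)
  have a1: "Af (tt k1) (x i1) = 1" using i1 by (simp add: Af_def split: if_splits)
  have "ennreal (tt k2) \<le> ccf (x i2)" using i2 by (simp add: Af_def split: if_splits)
  moreover have "ennreal (tt k1) \<le> ennreal (tt k2)" using lt by (simp add: ennreal_leI)
  ultimately have a2: "Af (tt k1) (x i2) = 1" by (simp add: Af_def)
  have r1: "i1 \<in> RR k1" using i1 EE_sub by auto
  have r2: "i2 \<in> RR k1" using i2 lt by (auto simp: EE_def RR_def)
  have ne: "i1 \<noteq> i2" using i1 i2 lt by (auto simp: EE_def)
  have "(\<Sum>i\<in>{i1, i2}. Af (tt k1) (x i)) \<le> (\<Sum>i\<in>RR k1. Af (tt k1) (x i))"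
    by (rule sum_mono2[OF RR_fin]) (use r1 r2 Af_nn in auto)
  then have "2 \<le> Nk n T1 T0 k1 x" unfolding Nk_eq[OF k1] using a1 a2 ne by simp
  then show False using N1 by simp
qed

lemma corr_bd:
  "\<bar>\<Sum>k\<in>{1..<K}. (if Nk n T1 T0 k x = 1 then cst k * Dk n T1 T0 k x else 0)\<bar> \<le> 1"
proof -
  define Q where "Q = {k \<in> {1..<K}. Nk n T1 T0 k x = 1 \<and> Dk n T1 T0 k x \<noteq> 0}"
  have Qs: "Q \<subseteq> {1..<K}" unfolding Q_def by auto
  have eq: "(\<Sum>k\<in>{1..<K}. (if Nk n T1 T0 k x = 1 then cst k * Dk n T1 T0 k x else 0)) = (\<Sum>k\<in>Q. cst k * Dk n T1 T0 k x)"
  proof (rule sum.mono_neutral_cong_right)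
    show "finite {1..<K}" by simp
    show "Q \<subseteq> {1..<K}" by (rule Qs)
    show "\<forall>i\<in>{1..<K} - Q. (if Nk n T1 T0 i x = 1 then cst i * Dk n T1 T0 i x else 0) = 0"
      unfolding Q_def by auto
    show "(if Nk n T1 T0 k x = 1 then cst k * Dk n T1 T0 k x else 0) = cst k * Dk n T1 T0 k x" if "k \<in> Q" for k
      using that unfolding Q_def by auto
  qed
  have card: "card Q \<le> 1"
  proof -
    have "k = k'" if "k \<in> Q" "k' \<in> Q" for k k'
    proof (rule ccontr)
      assume "k \<noteq> k'"
      have kk: "k \<in> {1..K}" "k' \<in> {1..K}" using that Qs by auto
      then have "tt k \<noteq> tt k'" using \<open>k \<noteq> k'\<close> tt_inj by (auto dest: inj_onD)
      then consider "tt k < tt k'" | "tt k' < tt k" by linarith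
      then show False
      proof cases
        case 1 then show False using no_two[OF kk 1] that unfolding Q_def by auto
      next
        case 2 then show False using no_two[OF kk(2,1) 2] that unfolding Q_def by auto
      qed
    qed
    then show ?thesis using card_le_Suc0_iff_eq[of Q] Qs finite_subset by fastforce
  qed
  have tb: "0 \<le> cst k * Dk n T1 T0 k x \<and> cst k * Dk n T1 T0 k x \<le> 1" if "k \<in> Q" for k
  proof -
    have k: "k \<in> {1..K}" using that Qs by auto
    have "Dk n T1 T0 k x \<le> Nk n T1 T0 k x" unfolding Dk_eq[OF k] Nk_eq[OF k]
      by (rule sum_mono2[OF RR_fin EE_sub]) (simp add: Af_nn)
    moreover have "0 \<le> Dk n T1 T0 k x" unfolding Dk_eq[OF k] by (simp add: Af_nn sum_nonneg)
    ultimately show ?thesis using that cst_bd[OF k] unfolding Q_def by (auto intro: mult_le_one)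
  qed
  have "0 \<le> (\<Sum>k\<in>Q. cst k * Dk n T1 T0 k x)" using tb by (simp add: sum_nonneg)
  moreover have "(\<Sum>k\<in>Q. cst k * Dk n T1 T0 k x) \<le> (\<Sum>k\<in>Q. 1)" using tb by (intro sum_mono) auto
  ultimately show ?thesis unfolding eq using card by simp
qed

definition "Yf i u = (\<Sum>k\<in>{1..<K}. (if T0 i = tt k then cst k else 0) * (Af (tt k) u - Gmix p \<mu> (tt k)))"

lemma X_eq: "(\<Sum>k\<in>{1..<K}. cst k * (Dk n T1 T0 k x - real (card (EE k)) * Gmix p \<mu> (tt k))) = (\<Sum>i\<in>{..<n}. Yf i (x i))"
proof -
  have "cst k * (Dk n T1 T0 k x - real (card (EE k)) * Gmix p \<mu> (tt k))
      = (\<Sum>i\<in>{..<n}. (if T0 i = tt k then cst k else 0) * (Af (tt k) (x i) - Gmix p \<mu> (tt k)))" if k: "k \<in> {1..<K}" for k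
  proof -
    have k': "k \<in> {1..K}" using k by auto
    have "cst k * (Dk n T1 T0 k x - real (card (EE k)) * Gmix p \<mu> (tt k))
        = (\<Sum>i\<in>EE k. cst k * (Af (tt k) (x i) - Gmix p \<mu> (tt k)))"
      unfolding Dk_eq[OF k'] by (simp add: sum_subtractf sum_distrib_left algebra_simps)
    also have "(\<Sum>i\<in>EE k. cst k * (Af (tt k) (x i) - Gmix p \<mu> (tt k)))
       = (\<Sum>i\<in>{..<n}. (if T0 i = tt k then cst k else 0) * (Af (tt k) (x i) - Gmix p \<mu> (tt k)))"
    proof -
      have EEe: "EE k = {i \<in> {..<n}. T0 i = tt k}" unfolding EE_def by auto
      show ?thesis unfolding EEe by (subst sum.inter_filter) (auto intro: sum.cong)
    qed
    finally show ?thesis .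
  qed
  then have "(\<Sum>k\<in>{1..<K}. cst k * (Dk n T1 T0 k x - real (card (EE k)) * Gmix p \<mu> (tt k)))
      = (\<Sum>k\<in>{1..<K}. \<Sum>i\<in>{..<n}. (if T0 i = tt k then cst k else 0) * (Af (tt k) (x i) - Gmix p \<mu> (tt k)))"
    by (rule sum.cong[OF refl])
  also have "\<dots> = (\<Sum>i\<in>{..<n}. Yf i (x i))" unfolding Yf_def by (rule sum.swap)
  finally show ?thesis .
qed

lemma Y_bd: "\<bar>Yf i u\<bar> \<le> 1"
proof -
  define Q where "Q = {k \<in> {1..<K}. T0 i = tt k}"
  have fQ: "finite Q" unfolding Q_def by simp
  have Yq: "Yf i u = (\<Sum>k\<in>Q. cst k * (Af (tt k) u - Gmix p \<mu> (tt k)))"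
    unfolding Yf_def Q_def by (subst sum.inter_filter) (auto intro: sum.cong)
  have card: "card Q \<le> 1"
  proof -
    have "k = k'" if "k \<in> Q" "k' \<in> Q" for k k'
      using that tt_inj unfolding Q_def by (auto dest: inj_onD)
    then show ?thesis using card_le_Suc0_iff_eq[OF fQ] by auto
  qed
  have tb: "\<bar>cst k * (Af (tt k) u - Gmix p \<mu> (tt k))\<bar> \<le> 1" if "k \<in> Q" for k
  proof -
    have k: "k \<in> {1..K}" using that unfolding Q_def by auto
    have "\<bar>Af (tt k) u - Gmix p \<mu> (tt k)\<bar> \<le> 1" using Gmix_bd[of "tt k"] by (auto simp: Af_def)
    then show ?thesis using cst_bd[OF k] by (auto simp: abs_mult intro: mult_le_one)
  qed
  have "\<bar>Yf i u\<bar> \<le> (\<Sum>k\<in>Q. \<bar>cst k * (Af (tt k) u - Gmix p \<mu> (tt k))\<bar>)" unfolding Yq by (rule sum_abs)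
  also have "\<dots> \<le> (\<Sum>k\<in>Q. 1)" using tb by (intro sum_mono) auto
  also have "\<dots> \<le> 1" using card by simp
  finally show ?thesis .
qed

lemma Y_meas: "Yf i \<in> borel_measurable (unit_law p \<mu>)"
  unfolding Yf_def by (intro borel_measurable_sum borel_measurable_times borel_measurable_diff Af_meas) auto

lemma Y_int: "(\<integral>u. Yf i u \<partial>unit_law p \<mu>) = 0"
proof -
  have "(\<integral>u. Yf i u \<partial>unit_law p \<mu>) = (\<Sum>k\<in>{1..<K}. \<integral>u. (if T0 i = tt k then cst k else 0) * (Af (tt k) u - Gmix p \<mu> (tt k)) \<partial>unit_law p \<mu>)"
    unfolding Yf_def
  proof (rule Bochner_Integration.integral_sum)
    fix k
    have "integrable (unit_law p \<mu>) (\<lambda>u. Af (tt k) u - Gmix p \<mu> (tt k))"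
    proof (rule finite_measure.integrable_const_bound[OF U_fin, where B=2])
      show "AE x in unit_law p \<mu>. norm (Af (tt k) x - Gmix p \<mu> (tt k)) \<le> 2"
        using Gmix_bd[of "tt k"] by (intro AE_I2) (auto simp: Af_def)
      show "(\<lambda>u. Af (tt k) u - Gmix p \<mu> (tt k)) \<in> borel_measurable (unit_law p \<mu>)"
        by (intro borel_measurable_diff Af_meas) auto
    qed
    then show "integrable (unit_law p \<mu>) (\<lambda>u. (if T0 i = tt k then cst k else 0) * (Af (tt k) u - Gmix p \<mu> (tt k)))"
      by (rule Bochner_Integration.integrable_mult_right)
  qed
  also have "\<dots> = (\<Sum>k\<in>{1..<K}. 0)"
  proof (rule sum.cong[OF refl])
    fix k
    have gb1: "\<bar>Gmix p \<mu> (tt k)\<bar> \<le> 1" using Gmix_bd[of "tt k"] by auto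
    have "(\<integral>u. Af (tt k) u - Gmix p \<mu> (tt k) \<partial>unit_law p \<mu>) = 0"
      using prob_space.prob_space[OF U_prob]
      by (subst Bochner_Integration.integral_diff)
         (auto simp: int_Af gb1 intro!: finite_measure.integrable_const_bound[OF U_fin, where B=1] Af_meas simp: Af_def)
    then show "(\<integral>u. (if T0 i = tt k then cst k else 0) * (Af (tt k) u - Gmix p \<mu> (tt k)) \<partial>unit_law p \<mu>) = 0"
      by simp
  qed
  finally show ?thesis by simp
qed

lemma per_n:
  "\<exists>X. X \<in> borel_measurable (pop_space n p \<mu>) \<and> (\<integral>x. (X x)\<^sup>2 \<partial>pop_space n p \<mu>) \<le> real n
     \<and> integrable (pop_space n p \<mu>) (\<lambda>x. (X x)\<^sup>2)
     \<and> (AE \<omega> in pop_space n p \<mu>. \<bar>\<Sum>k\<in>{1..<K}. xi3 n p \<mu> T1 T0 k \<omega>\<bar> \<le> \<bar>X \<omega>\<bar> + 1)"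
proof (intro exI conjI)
  interpret C: cnt_setting "unit_law p \<mu>" "{..<n}" "Af 0" "Bf 0" "Cf 0" by (rule setting)
  have Meq: "pop_space n p \<mu> = C.M" by (simp add: pop_space_def)
  show "(\<lambda>x. \<Sum>i\<in>{..<n}. Yf i (x i)) \<in> borel_measurable (pop_space n p \<mu>)"
    unfolding Meq by (intro borel_measurable_sum C.comp_meas Y_meas) auto
  show "(\<integral>x. (\<Sum>i\<in>{..<n}. Yf i (x i))\<^sup>2 \<partial>pop_space n p \<mu>) \<le> real n"
    unfolding Meq using C.second_moment[of Yf, OF Y_meas Y_bd Y_int] by simp
  show "integrable (pop_space n p \<mu>) (\<lambda>x. (\<Sum>i\<in>{..<n}. Yf i (x i))\<^sup>2)"
    unfolding Meq
  proof (rule C.intg[where B="real n ^ 2"])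
    show "(\<lambda>x. (\<Sum>i\<in>{..<n}. Yf i (x i))\<^sup>2) \<in> borel_measurable C.M"
      by (intro borel_measurable_power borel_measurable_sum C.comp_meas Y_meas) auto
    fix x
    have "\<bar>\<Sum>i\<in>{..<n}. Yf i (x i)\<bar> \<le> (\<Sum>i\<in>{..<n}. \<bar>Yf i (x i)\<bar>)" by (rule sum_abs)
    also have "\<dots> \<le> (\<Sum>i\<in>{..<n}. 1)" by (intro sum_mono Y_bd)
    finally have "\<bar>\<Sum>i\<in>{..<n}. Yf i (x i)\<bar> \<le> real n" by simp
    then have "\<bar>\<Sum>i\<in>{..<n}. Yf i (x i)\<bar> \<le> \<bar>real n\<bar>" by simp
    then have "(\<Sum>i\<in>{..<n}. Yf i (x i))\<^sup>2 \<le> (real n)\<^sup>2" by (simp only: abs_le_square_iff)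
    then show "\<bar>(\<Sum>i\<in>{..<n}. Yf i (x i))\<^sup>2\<bar> \<le> real n ^ 2" by simp
  qed
  show "AE \<omega> in pop_space n p \<mu>. \<bar>\<Sum>k\<in>{1..<K}. xi3 n p \<mu> T1 T0 k \<omega>\<bar> \<le> \<bar>\<Sum>i\<in>{..<n}. Yf i (\<omega> i)\<bar> + 1"
    using AE_pos
  proof (rule AE_mp, intro AE_I2 impI)
    fix \<omega> assume w: "\<omega> \<in> space (pop_space n p \<mu>)"
    assume P: "\<forall>k\<in>{1..<K}. measure (pop_space n p \<mu>) {x \<in> space (pop_space n p \<mu>). Nk n T1 T0 k x = Nk n T1 T0 k \<omega>} \<noteq> 0"
    have "(\<Sum>k\<in>{1..<K}. xi3 n p \<mu> T1 T0 k \<omega>) = (\<Sum>k\<in>{1..<K}. cst k * (Dk n T1 T0 k \<omega> - real (card (EE k)) * Gmix p \<mu> (tt k))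
           - (if Nk n T1 T0 k \<omega> = 1 then cst k * Dk n T1 T0 k \<omega> else 0))"
      by (rule sum.cong[OF refl]) (rule PK, use w P in auto)
    also have "\<dots> = (\<Sum>i\<in>{..<n}. Yf i (\<omega> i)) - (\<Sum>k\<in>{1..<K}. (if Nk n T1 T0 k \<omega> = 1 then cst k * Dk n T1 T0 k \<omega> else 0))"
      by (subst sum_subtractf) (subst X_eq, rule refl)
    finally show "\<bar>\<Sum>k\<in>{1..<K}. xi3 n p \<mu> T1 T0 k \<omega>\<bar> \<le> \<bar>\<Sum>i\<in>{..<n}. Yf i (\<omega> i)\<bar> + 1"
      using corr_bd[of \<omega>] by linarith
  qed
qed

lemma M_prob: "prob_space (pop_space n p \<mu>)"
  unfolding pop_space_def by (rule prob_space_PiM) (rule U_prob)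

end




theorem lemmaA10:
  fixes T1 T0 :: "nat \<Rightarrow> nat \<Rightarrow> real"
    and p :: "nat \<Rightarrow> real"
    and \<mu> :: "nat \<Rightarrow> (ennreal \<times> ennreal) measure"
  assumes p_pos: "\<And>n. 0 < p n" and p_lt1: "\<And>n. p n < 1"
    and cens_prob: "\<And>n. prob_space (\<mu> n)"
    and cens_sets: "\<And>n. sets (\<mu> n) = sets borel"
    and T1_nonneg: "\<And>n i. i < n \<Longrightarrow> 0 \<le> T1 n i"
    and T0_nonneg: "\<And>n i. i < n \<Longrightarrow> 0 \<le> T0 n i"
    and H0: "\<And>n i. i < n \<Longrightarrow> T1 n i = T0 n i"
  shows "bounded_in_prob (\<lambda>n. pop_space n (p n) (\<mu> n))
           (\<lambda>n \<omega>. (\<Sum>k\<in>{1..<Ktimes n (T0 n)}. xi3 n (p n) (\<mu> n) (T1 n) (T0 n) k \<omega>) / sqrt (real n))"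
  unfolding bounded_in_prob_def
proof (intro allI impI)
  fix \<epsilon> :: real assume e: "0 < \<epsilon>"
  define c0 where "c0 = 1 + 1 / \<epsilon>"
  have ie: "0 < 1 / \<epsilon>" using e by simp
  have c0: "1 \<le> c0" "0 < c0" unfolding c0_def using ie by linarith+
  have c0e: "1 / c0\<^sup>2 < \<epsilon>"
  proof -
    have "1 / c0\<^sup>2 \<le> 1 / c0" using c0 by (simp add: power2_eq_square field_simps)
    also have "1 / c0 = \<epsilon> / (\<epsilon> + 1)" using e by (simp add: c0_def field_simps)
    also have "\<dots> < \<epsilon>" using e by (simp add: field_simps)
    finally show ?thesis .
  qed
  show "\<exists>B. \<forall>\<^sub>F n in sequentially. measure (pop_space n (p n) (\<mu> n))
          {\<omega> \<in> space (pop_space n (p n) (\<mu> n)). B < \<bar>(\<Sum>k\<in>{1..<Ktimes n (T0 n)}. xi3 n (p n) (\<mu> n) (T1 n) (T0 n) k \<omega>) / sqrt (real n)\<bar>} < \<epsilon>"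
  proof (intro exI eventually_sequentiallyI)
    fix n :: nat assume n: "1 \<le> n"
    interpret S: pop_setting "p n" "\<mu> n" n "T1 n" "T0 n"
      by (intro pop_setting.intro unit_setting.intro pop_setting_axioms.intro p_pos p_lt1 cens_prob cens_sets T0_nonneg H0)
    let ?M = "pop_space n (p n) (\<mu> n)"
    let ?S = "\<lambda>\<omega>. \<Sum>k\<in>{1..<Ktimes n (T0 n)}. xi3 n (p n) (\<mu> n) (T1 n) (T0 n) k \<omega>"
    obtain X where Xm[measurable]: "X \<in> borel_measurable ?M" and X2: "(\<integral>x. (X x)\<^sup>2 \<partial>?M) \<le> real n"
      and Xi: "integrable ?M (\<lambda>x. (X x)\<^sup>2)"
      and AE: "AE \<omega> in ?M. \<bar>?S \<omega>\<bar> \<le> \<bar>X \<omega>\<bar> + 1"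
      using S.per_n by blast
    interpret M: prob_space ?M by (rule S.M_prob)
    have sn: "1 \<le> sqrt (real n)" using n by simp
    define c where "c = c0 * sqrt (real n)"
    have cpos: "0 < c" using c0 sn by (simp add: c_def)
    have "M.prob {\<omega> \<in> space ?M. 2 + 1 / \<epsilon> < \<bar>?S \<omega> / sqrt (real n)\<bar>} \<le> M.prob {\<omega> \<in> space ?M. c \<le> \<bar>X \<omega>\<bar>}"
    proof (rule M.finite_measure_mono_AE)
      show "{\<omega> \<in> space ?M. c \<le> \<bar>X \<omega>\<bar>} \<in> sets ?M" by measurable
      show "AE \<omega> in ?M. \<omega> \<in> {\<omega> \<in> space ?M. 2 + 1 / \<epsilon> < \<bar>?S \<omega> / sqrt (real n)\<bar>} \<longrightarrow> \<omega> \<in> {\<omega> \<in> space ?M. c \<le> \<bar>X \<omega>\<bar>}"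
        using AE
      proof (rule AE_mp, intro AE_I2 impI)
        fix \<omega> assume w: "\<omega> \<in> space ?M" and b: "\<bar>?S \<omega>\<bar> \<le> \<bar>X \<omega>\<bar> + 1"
          and h: "\<omega> \<in> {\<omega> \<in> space ?M. 2 + 1 / \<epsilon> < \<bar>?S \<omega> / sqrt (real n)\<bar>}"
        have "(c0 + 1) * sqrt (real n) < \<bar>?S \<omega>\<bar>"
          using h sn by (simp add: abs_divide c0_def field_simps)
        then have "c + sqrt (real n) - 1 < \<bar>X \<omega>\<bar>" using b by (simp add: c_def algebra_simps)
        then have "c \<le> \<bar>X \<omega>\<bar>" using sn by linarith
        then show "\<omega> \<in> {\<omega> \<in> space ?M. c \<le> \<bar>X \<omega>\<bar>}" using w by simp
      qed
    qed
    also have "\<dots> \<le> (\<integral>x. (X x)\<^sup>2 \<partial>?M) / c\<^sup>2"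
      using M.second_moment_method[OF Xm Xi cpos] by simp
    also have "\<dots> \<le> real n / c\<^sup>2"
      using X2 cpos by (simp add: divide_right_mono)
    also have "\<dots> = 1 / c0\<^sup>2" using n c0 by (simp add: c_def power_mult_distrib)
    also have "\<dots> < \<epsilon>" by (rule c0e)
    finally show "M.prob {\<omega> \<in> space ?M. 2 + 1 / \<epsilon> < \<bar>?S \<omega> / sqrt (real n)\<bar>} < \<epsilon>" .
  qed
qed


end
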